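(* Let $\mathbb{T}^2=[-\pi,\pi]^2$, let $k_0$ be a positive integer, $U(y)=\sin(k_0y)$, let $f_0,g_0$ be smooth $2\pi$-periodic functions, and let $\rho$ solve \[ \partial_t\rho+U(y)\partial_x\rho=0,\qquad \rho(0,x,y)=f_0(y)\sin x+g_0(y)\cos x . \] Then $\|\rho(t,\cdot)\|_{H^1}^2\le 2\|\rho(0,\cdot)\|_{H^1}^2+10\pi k_0^2t^2\|\rho(0,\cdot)\|_{L^2}^2$.
   Context: $\|F\|_{H^1}^2=\int_{\mathbb{T}^2}\big(F^2+|\nabla F|^2\big)\,dx\,dy$. *)

theory Defs
  imports "HOL-Analysis.Analysis"
begin

definition torus :: "(real \<times> real) set" where
  "torus = cbox (-pi, -pi) (pi, pi)"

definition smooth_fun :: "(real \<Rightarrow> real) \<Rightarrow> bool" where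
  "smooth_fun f \<longleftrightarrow> (\<forall>n. \<forall>y. ((deriv ^^ n) f) differentiable (at y))"

definition periodic_2pi :: "(real \<Rightarrow> real) \<Rightarrow> bool" where
  "periodic_2pi f \<longleftrightarrow> (\<forall>y. f (y + 2 * pi) = f y)"

definition L2_sq :: "(real \<Rightarrow> real \<Rightarrow> real) \<Rightarrow> real" where
  "L2_sq F = integral torus (\<lambda>(x, y). (F x y)\<^sup>2)"

definition H1_sq :: "(real \<Rightarrow> real \<Rightarrow> real) \<Rightarrow> real" where
  "H1_sq F = integral torus (\<lambda>(x, y). (F x y)\<^sup>2
      + (deriv (\<lambda>x'. F x' y) x)\<^sup>2 + (deriv (\<lambda>y'. F x y') y)\<^sup>2)"

end

theory Submission
  imports Defs
begin

lemma char:
  fixes \<rho> \<rho>t \<rho>x :: "real \<Rightarrow> real \<Rightarrow> real \<Rightarrow> real" and u :: real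
  assumes dt: "\<And>s x y. s \<ge> 0 \<Longrightarrow> ((\<lambda>s'. \<rho> s' x y) has_real_derivative \<rho>t s x y) (at s within {0..})"
    and dx: "\<And>s x y. s \<ge> 0 \<Longrightarrow> ((\<lambda>x'. \<rho> s x' y) has_real_derivative \<rho>x s x y) (at x)"
    and cx: "continuous_on ({0..} \<times> UNIV) (\<lambda>(s, x, y). \<rho>x s x y)"
    and pde: "\<And>s x. s \<ge> 0 \<Longrightarrow> \<rho>t s x y + u * \<rho>x s x y = 0"
    and t: "t \<ge> 0"
  shows "\<rho> t x y = \<rho> 0 (x - t * u) y"
proof -
  define x0 where "x0 = x - t * u"
  define h where "h = (\<lambda>s. \<rho> s (x0 + s * u) y)"
  have cz: "continuous_on ({0..} \<times> UNIV) (\<lambda>(s, z). blinfun_mult_right (\<rho>x s z y))"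
  proof -
    have "continuous_on ({0..} \<times> UNIV) ((\<lambda>(s, x, y). \<rho>x s x y) \<circ> (\<lambda>(s,z). (s, z, y)))"
    proof (rule continuous_on_compose)
      show "continuous_on ({0..} \<times> UNIV) (\<lambda>(s, z). (s, z, y))"
        by (auto intro!: continuous_intros simp: case_prod_unfold)
      show "continuous_on ((\<lambda>(s, z). (s, z, y)) ` ({0..} \<times> UNIV)) (\<lambda>(s, x, y). \<rho>x s x y)"
        by (rule continuous_on_subset[OF cx]) auto
    qed
    then have "continuous_on ({0..} \<times> UNIV) (\<lambda>(s, z::real). \<rho>x s z y)"
      by (simp add: o_def case_prod_unfold)
    then show ?thesis
      by (auto intro!: continuous_on_compose2[OF linear_continuous_on[OF bounded_linear_blinfun_mult_right]] simp: case_prod_unfold)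
  qed
  have D: "((\<lambda>(s, z). \<rho> s z y) has_derivative (\<lambda>(ts, tz). \<rho>t s z y * ts + blinfun_mult_right (\<rho>x s z y) tz)) (at (s, z) within {0..} \<times> UNIV)"
    if "s \<ge> 0" for s z
  proof (rule has_derivative_partialsI)
    show "((\<lambda>s. \<rho> s z y) has_derivative (*) (\<rho>t s z y)) (at s within {0..})"
      using dt[OF that] by (simp add: has_field_derivative_def)
    show "\<And>s za. s \<in> {0..} \<Longrightarrow> za \<in> UNIV \<Longrightarrow> ((\<lambda>z. \<rho> s z y) has_derivative blinfun_apply (blinfun_mult_right (\<rho>x s za y))) (at za within UNIV)"
      using dx by (auto simp: has_field_derivative_def)
    show "continuous (at (s, z) within {0..} \<times> UNIV) (\<lambda>(s, z). blinfun_mult_right (\<rho>x s z y))"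
      using cz that by (simp add: continuous_on_eq_continuous_within)
  qed auto
  have H: "(h has_derivative (\<lambda>_. 0)) (at s within {0..})" if "s \<ge> 0" for s
  proof -
    have g: "((\<lambda>s. (s, x0 + s * u)) has_derivative (\<lambda>hh. (hh, hh * u))) (at s within {0..})"
      by (auto intro!: derivative_eq_intros)
    have "((\<lambda>(s, z). \<rho> s z y) \<circ> (\<lambda>s. (s, x0 + s * u)) has_derivative
       (\<lambda>(ts, tz). \<rho>t s (x0 + s*u) y * ts + blinfun_mult_right (\<rho>x s (x0 + s*u) y) tz) \<circ> (\<lambda>hh. (hh, hh * u))) (at s within {0..})"
      apply (rule diff_chain_within[OF g])
      apply (rule has_derivative_subset[OF D[OF that]])
      by auto
    moreover have "(\<lambda>(ts, tz). \<rho>t s (x0 + s*u) y * ts + blinfun_mult_right (\<rho>x s (x0 + s*u) y) tz) \<circ> (\<lambda>hh. (hh, hh * u)) = (\<lambda>_. 0)"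
    proof
      fix hh
      have "\<rho>t s (x0 + s*u) y * hh + \<rho>x s (x0 + s*u) y * (hh * u) = hh * (\<rho>t s (x0 + s*u) y + u * \<rho>x s (x0 + s*u) y)"
        by (simp add: algebra_simps)
      also have "\<dots> = 0" using pde[OF that] by simp
      finally show "((\<lambda>(ts, tz). \<rho>t s (x0 + s*u) y * ts + blinfun_mult_right (\<rho>x s (x0 + s*u) y) tz) \<circ> (\<lambda>hh. (hh, hh * u))) hh = 0"
        by simp
    qed
    ultimately show ?thesis by (simp add: h_def o_def)
  qed
  obtain c where "\<forall>s\<in>{0..}. h s = c"
    using has_derivative_zero_constant[of "{0..}" h] H by auto
  then have "h t = h 0" using t by auto
  then show ?thesis by (simp add: h_def x0_def)
qed

lemma trig_aux:
  fixes S C p q :: real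
  assumes h: "S\<^sup>2 + C\<^sup>2 = 1"
  shows "(p\<^sup>2 + q\<^sup>2) / 2 + (q\<^sup>2 - p\<^sup>2) / 2 * (C\<^sup>2 - S\<^sup>2) + 2 * p * q * (S * C) = (p * S + q * C)\<^sup>2"
proof -
  have e: "(p\<^sup>2 + q\<^sup>2) / 2 = (p\<^sup>2 + q\<^sup>2) / 2 * (S\<^sup>2 + C\<^sup>2)" using h by simp
  show ?thesis by (subst e) (simp add: field_simps power2_eq_square)
qed

lemma sq_int:
  fixes p q c :: real
  shows "((\<lambda>x. (p * sin (x - c) + q * cos (x - c))\<^sup>2) has_integral pi * (p\<^sup>2 + q\<^sup>2)) {-pi..pi}"
proof -
  define F where "F = (\<lambda>x. (p\<^sup>2 + q\<^sup>2) * x / 2 + (q\<^sup>2 - p\<^sup>2) / 2 * (sin (x - c) * cos (x - c))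
        - p * q / 2 * ((cos (x - c))\<^sup>2 - (sin (x - c))\<^sup>2))"
  have D: "(F has_real_derivative (p * sin (x - c) + q * cos (x - c))\<^sup>2) (at x within {-pi..pi})" for x
  proof -
    have "(F has_real_derivative (p\<^sup>2 + q\<^sup>2) / 2 + (q\<^sup>2 - p\<^sup>2) / 2 * ((cos (x - c))\<^sup>2 - (sin (x - c))\<^sup>2)
        + 2 * p * q * (sin (x - c) * cos (x - c))) (at x within {-pi..pi})"
      unfolding F_def
      by (rule derivative_eq_intros refl | simp)+ (simp add: power2_eq_square algebra_simps)
    moreover have "(p\<^sup>2 + q\<^sup>2) / 2 + (q\<^sup>2 - p\<^sup>2) / 2 * ((cos (x - c))\<^sup>2 - (sin (x - c))\<^sup>2)
        + 2 * p * q * (sin (x - c) * cos (x - c)) = (p * sin (x - c) + q * cos (x - c))\<^sup>2"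
      by (rule trig_aux) simp
    ultimately show ?thesis by simp
  qed
  have e1: "sin (pi - c) = sin (-pi - c)" "cos (pi - c) = cos (-pi - c)"
    by (simp_all add: sin_diff cos_diff)
  have "F pi - F (-pi) = pi * (p\<^sup>2 + q\<^sup>2)"
    unfolding F_def e1 by (simp add: field_simps)
  then show ?thesis
    using fundamental_theorem_of_calculus[of "-pi" pi F "\<lambda>x. (p * sin (x - c) + q * cos (x - c))\<^sup>2"] D
    by (simp add: has_real_derivative_iff_has_vector_derivative)
qed

lemma H1_formula:
  fixes f g fd gd :: "real \<Rightarrow> real" and k t :: real
  assumes cf: "continuous_on UNIV f" and cg: "continuous_on UNIV g"
    and cfd: "continuous_on UNIV fd" and cgd: "continuous_on UNIV gd"
    and df: "\<And>y. (f has_real_derivative fd y) (at y)"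
    and dg: "\<And>y. (g has_real_derivative gd y) (at y)"
  shows "H1_sq (\<lambda>x y. f y * sin (x - t * sin (k * y)) + g y * cos (x - t * sin (k * y)))
    = integral {-pi..pi} (\<lambda>y. pi * (2 * ((f y)\<^sup>2 + (g y)\<^sup>2)
        + (fd y + t * (k * cos (k * y)) * g y)\<^sup>2 + (gd y - t * (k * cos (k * y)) * f y)\<^sup>2))"
proof -
  define th where "th = (\<lambda>x y. x - t * sin (k * y))"
  define G where "G = (\<lambda>x y. (f y * sin (th x y) + g y * cos (th x y))\<^sup>2
     + ((- g y) * sin (th x y) + f y * cos (th x y))\<^sup>2
     + ((fd y + t * (k * cos (k * y)) * g y) * sin (th x y) + (gd y - t * (k * cos (k * y)) * f y) * cos (th x y))\<^sup>2)"
  have dX: "deriv (\<lambda>x'. f y * sin (x' - t * sin (k * y)) + g y * cos (x' - t * sin (k * y))) x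
      = (- g y) * sin (th x y) + f y * cos (th x y)" for x y
    unfolding th_def
    by (rule DERIV_imp_deriv) (rule derivative_eq_intros refl | simp)+
  have dY: "deriv (\<lambda>y'. f y' * sin (x - t * sin (k * y')) + g y' * cos (x - t * sin (k * y'))) y
      = (fd y + t * (k * cos (k * y)) * g y) * sin (th x y) + (gd y - t * (k * cos (k * y)) * f y) * cos (th x y)" for x y
    unfolding th_def
    apply (rule DERIV_imp_deriv)
    apply (rule derivative_eq_intros refl df dg | simp)+
    apply (simp add: algebra_simps)
    done
  have H: "H1_sq (\<lambda>x y. f y * sin (x - t * sin (k * y)) + g y * cos (x - t * sin (k * y)))
      = integral (cbox (-pi, -pi) (pi, pi)) (\<lambda>(x, y). G x y)"
    unfolding H1_sq_def torus_def G_def dX dY by (simp add: th_def)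
  have cG: "continuous_on (cbox (-pi, -pi) (pi, pi)) (\<lambda>(x, y). G x y)"
    unfolding G_def th_def case_prod_unfold
    by (intro continuous_intros continuous_on_compose2[OF cf] continuous_on_compose2[OF cg]
        continuous_on_compose2[OF cfd] continuous_on_compose2[OF cgd]) auto
  have "integral (cbox (-pi, -pi) (pi, pi)) (\<lambda>(x, y). G x y)
     = integral (cbox (-pi) pi) (\<lambda>x. integral (cbox (-pi) pi) (\<lambda>y. G x y))"
    using integral_prod_continuous[OF cG] by simp
  also have "\<dots> = integral (cbox (-pi) pi) (\<lambda>y. integral (cbox (-pi) pi) (\<lambda>x. G x y))"
    by (rule integral_swap_continuous) (use cG in simp)
  also have "\<dots> = integral {-pi..pi} (\<lambda>y. pi * (2 * ((f y)\<^sup>2 + (g y)\<^sup>2)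
        + (fd y + t * (k * cos (k * y)) * g y)\<^sup>2 + (gd y - t * (k * cos (k * y)) * f y)\<^sup>2))"
    unfolding cbox_interval
  proof (rule integral_cong)
    fix y
    have "((\<lambda>x. G x y) has_integral pi * ((f y)\<^sup>2 + (g y)\<^sup>2) + pi * ((- g y)\<^sup>2 + (f y)\<^sup>2)
        + pi * ((fd y + t * (k * cos (k * y)) * g y)\<^sup>2 + (gd y - t * (k * cos (k * y)) * f y)\<^sup>2)) {-pi..pi}"
      unfolding G_def th_def by (intro has_integral_add sq_int)
    then show "integral {-pi..pi} (\<lambda>x. G x y) = pi * (2 * ((f y)\<^sup>2 + (g y)\<^sup>2)
        + (fd y + t * (k * cos (k * y)) * g y)\<^sup>2 + (gd y - t * (k * cos (k * y)) * f y)\<^sup>2)"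
      by (simp add: integral_unique algebra_simps)
  qed
  finally show ?thesis using H by simp
qed

lemma L2_formula:
  fixes f g :: "real \<Rightarrow> real"
  assumes cf: "continuous_on UNIV f" and cg: "continuous_on UNIV g"
  shows "L2_sq (\<lambda>x y. f y * sin (x - 0 * sin (k * y)) + g y * cos (x - 0 * sin (k * y)))
    = integral {-pi..pi} (\<lambda>y. pi * ((f y)\<^sup>2 + (g y)\<^sup>2))"
proof -
  define G where "G = (\<lambda>x y. (f y * sin (x - 0) + g y * cos (x - 0))\<^sup>2)"
  have H: "L2_sq (\<lambda>x y. f y * sin (x - 0 * sin (k * y)) + g y * cos (x - 0 * sin (k * y)))
      = integral (cbox (-pi, -pi) (pi, pi)) (\<lambda>(x, y). G x y)"
    unfolding L2_sq_def torus_def G_def by simp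
  have cG: "continuous_on (cbox (-pi, -pi) (pi, pi)) (\<lambda>(x, y). G x y)"
    unfolding G_def case_prod_unfold
    by (intro continuous_intros continuous_on_compose2[OF cf] continuous_on_compose2[OF cg]) auto
  have "integral (cbox (-pi, -pi) (pi, pi)) (\<lambda>(x, y). G x y)
     = integral (cbox (-pi) pi) (\<lambda>x. integral (cbox (-pi) pi) (\<lambda>y. G x y))"
    using integral_prod_continuous[OF cG] by simp
  also have "\<dots> = integral (cbox (-pi) pi) (\<lambda>y. integral (cbox (-pi) pi) (\<lambda>x. G x y))"
    by (rule integral_swap_continuous) (use cG in simp)
  also have "\<dots> = integral {-pi..pi} (\<lambda>y. pi * ((f y)\<^sup>2 + (g y)\<^sup>2))"
    unfolding cbox_interval
  proof (rule integral_cong)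
    fix y
    have "((\<lambda>x. G x y) has_integral pi * ((f y)\<^sup>2 + (g y)\<^sup>2)) {-pi..pi}"
      unfolding G_def by (rule sq_int)
    then show "integral {-pi..pi} (\<lambda>x. G x y) = pi * ((f y)\<^sup>2 + (g y)\<^sup>2)"
      by (simp add: integral_unique)
  qed
  finally show ?thesis using H by simp
qed

lemma pw_ineq:
  fixes a b a' b' K k t :: real
  assumes K: "K\<^sup>2 \<le> k\<^sup>2"
  shows "pi * (2 * (a\<^sup>2 + b\<^sup>2) + (a' + t * K * b)\<^sup>2 + (b' - t * K * a)\<^sup>2)
    \<le> 2 * (pi * (2 * (a\<^sup>2 + b\<^sup>2) + (a' + 0 * K * b)\<^sup>2 + (b' - 0 * K * a)\<^sup>2))
       + 10 * pi * k\<^sup>2 * t\<^sup>2 * (pi * (a\<^sup>2 + b\<^sup>2))"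
proof -
  have s1: "(a' + t * K * b)\<^sup>2 \<le> 2 * a'\<^sup>2 + 2 * (t\<^sup>2 * K\<^sup>2 * b\<^sup>2)"
    using sum_squares_ge_zero[of "a' - t * K * b" 0] by (simp add: power2_eq_square algebra_simps)
  have s2: "(b' - t * K * a)\<^sup>2 \<le> 2 * b'\<^sup>2 + 2 * (t\<^sup>2 * K\<^sup>2 * a\<^sup>2)"
    using sum_squares_ge_zero[of "b' + t * K * a" 0] by (simp add: power2_eq_square algebra_simps)
  have s3: "t\<^sup>2 * K\<^sup>2 * (a\<^sup>2 + b\<^sup>2) \<le> t\<^sup>2 * k\<^sup>2 * (a\<^sup>2 + b\<^sup>2)"
    by (intro mult_right_mono mult_left_mono K) auto
  have p1: "pi \<ge> 1" using pi_gt3 by simp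
  define X where "X = t\<^sup>2 * k\<^sup>2 * (a\<^sup>2 + b\<^sup>2)"
  have X0: "0 \<le> X" unfolding X_def by simp
  have s4: "t\<^sup>2 * k\<^sup>2 * (a\<^sup>2 + b\<^sup>2) \<le> pi * X"
    using mult_right_mono[OF p1 X0] by (simp add: X_def)
  have "(a' + t * K * b)\<^sup>2 + (b' - t * K * a)\<^sup>2 \<le> 2 * (a'\<^sup>2 + b'\<^sup>2) + 2 * (pi * X)"
    using s1 s2 s3 s4 by (simp add: algebra_simps)
  then have A: "pi * ((a' + t * K * b)\<^sup>2 + (b' - t * K * a)\<^sup>2) \<le> pi * (2 * (a'\<^sup>2 + b'\<^sup>2) + 2 * (pi * X))"
    by (intro mult_left_mono) auto
  have B: "0 \<le> pi * (2 * (a\<^sup>2 + b\<^sup>2)) + 8 * (pi * (pi * X))" using X0 by simp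
  have "pi * (2 * (a\<^sup>2 + b\<^sup>2) + (a' + t * K * b)\<^sup>2 + (b' - t * K * a)\<^sup>2)
      = pi * (2 * (a\<^sup>2 + b\<^sup>2)) + pi * ((a' + t * K * b)\<^sup>2 + (b' - t * K * a)\<^sup>2)"
    by (simp add: algebra_simps)
  also have "\<dots> \<le> pi * (2 * (a\<^sup>2 + b\<^sup>2)) + pi * (2 * (a'\<^sup>2 + b'\<^sup>2) + 2 * (pi * X))"
    using A by simp
  also have "\<dots> \<le> pi * (2 * (a\<^sup>2 + b\<^sup>2)) + pi * (2 * (a'\<^sup>2 + b'\<^sup>2) + 2 * (pi * X))
      + (pi * (2 * (a\<^sup>2 + b\<^sup>2)) + 8 * (pi * (pi * X)))"
    using B by simp
  also have "\<dots> = 2 * (pi * (2 * (a\<^sup>2 + b\<^sup>2) + (a' + 0 * K * b)\<^sup>2 + (b' - 0 * K * a)\<^sup>2))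
       + 10 * pi * k\<^sup>2 * t\<^sup>2 * (pi * (a\<^sup>2 + b\<^sup>2))"
    unfolding X_def by (simp add: algebra_simps)
  finally show ?thesis .
qed

theorem lemma3p4:
  fixes k0 :: nat and f0 g0 :: "real \<Rightarrow> real"
    and \<rho> \<rho>t \<rho>x \<rho>y :: "real \<Rightarrow> real \<Rightarrow> real \<Rightarrow> real"
    and t :: real
  assumes k0: "k0 > 0"
    and f0: "smooth_fun f0" "periodic_2pi f0"
    and g0: "smooth_fun g0" "periodic_2pi g0"
    and dt: "\<And>s x y. s \<ge> 0 \<Longrightarrow> ((\<lambda>s'. \<rho> s' x y) has_real_derivative \<rho>t s x y) (at s within {0..})"
    and dx: "\<And>s x y. s \<ge> 0 \<Longrightarrow> ((\<lambda>x'. \<rho> s x' y) has_real_derivative \<rho>x s x y) (at x)"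
    and dy: "\<And>s x y. s \<ge> 0 \<Longrightarrow> ((\<lambda>y'. \<rho> s x y') has_real_derivative \<rho>y s x y) (at y)"
    and cont: "continuous_on ({0..} \<times> UNIV) (\<lambda>(s, x, y). \<rho> s x y)"
      "continuous_on ({0..} \<times> UNIV) (\<lambda>(s, x, y). \<rho>t s x y)"
      "continuous_on ({0..} \<times> UNIV) (\<lambda>(s, x, y). \<rho>x s x y)"
      "continuous_on ({0..} \<times> UNIV) (\<lambda>(s, x, y). \<rho>y s x y)"
    and pde: "\<And>s x y. s \<ge> 0 \<Longrightarrow> \<rho>t s x y + sin (real k0 * y) * \<rho>x s x y = 0"
    and init: "\<And>x y. \<rho> 0 x y = f0 y * sin x + g0 y * cos x"
    and t: "t \<ge> 0"
  shows "H1_sq (\<rho> t) \<le> 2 * H1_sq (\<rho> 0) + 10 * pi * (real k0)\<^sup>2 * t\<^sup>2 * L2_sq (\<rho> 0)"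
proof -
  define k where "k = real k0"
  have sm: "\<And>h y. smooth_fun h \<Longrightarrow> h differentiable (at y) \<and> deriv h differentiable (at y)"
  proof -
    fix h :: "real \<Rightarrow> real" and y assume "smooth_fun h"
    then have "((deriv ^^ 0) h) differentiable (at y)" "((deriv ^^ 1) h) differentiable (at y)"
      unfolding smooth_fun_def by blast+
    then show "h differentiable (at y) \<and> deriv h differentiable (at y)" by simp
  qed
  have cf: "continuous_on UNIV f0" and cfd: "continuous_on UNIV (deriv f0)"
    and cg: "continuous_on UNIV g0" and cgd: "continuous_on UNIV (deriv g0)"
    using sm[OF f0(1)] sm[OF g0(1)]
    by (auto intro!: continuous_at_imp_continuous_on differentiable_imp_continuous_within)
  have df: "\<And>y. (f0 has_real_derivative deriv f0 y) (at y)"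
    and dg: "\<And>y. (g0 has_real_derivative deriv g0 y) (at y)"
    using sm[OF f0(1)] sm[OF g0(1)] by (auto simp: DERIV_deriv_iff_real_differentiable)
  define R where "R = (\<lambda>s x y. f0 y * sin (x - s * sin (k * y)) + g0 y * cos (x - s * sin (k * y)))"
  have rho_eq: "\<rho> s = R s" if "s \<ge> 0" for s
  proof (intro ext)
    fix x y
    have "\<rho> s x y = \<rho> 0 (x - s * sin (k * y)) y"
      apply (rule char[where \<rho>t = \<rho>t and \<rho>x = \<rho>x])
      using dt apply blast
      using dx apply blast
      using cont(3) apply blast
      using pde apply (simp add: k_def)
      using that apply simp
      done
    then show "\<rho> s x y = R s x y" by (simp add: init R_def)
  qed
  define J where "J = (\<lambda>s y. pi * (2 * ((f0 y)\<^sup>2 + (g0 y)\<^sup>2)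
        + (deriv f0 y + s * (k * cos (k * y)) * g0 y)\<^sup>2 + (deriv g0 y - s * (k * cos (k * y)) * f0 y)\<^sup>2))"
  define L where "L = (\<lambda>y. pi * ((f0 y)\<^sup>2 + (g0 y)\<^sup>2))"
  have HR: "H1_sq (R s) = integral {-pi..pi} (J s)" for s
    unfolding R_def J_def by (rule H1_formula[OF cf cg cfd cgd df dg])
  have LR: "L2_sq (R 0) = integral {-pi..pi} L"
    unfolding R_def L_def by (rule L2_formula[OF cf cg])
  have cJ: "continuous_on {-pi..pi} (J s)" for s
    unfolding J_def
    by (intro continuous_intros continuous_on_compose2[OF cf] continuous_on_compose2[OF cg]
        continuous_on_compose2[OF cfd] continuous_on_compose2[OF cgd]) auto
  have cL: "continuous_on {-pi..pi} L"
    unfolding L_def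
    by (intro continuous_intros continuous_on_compose2[OF cf] continuous_on_compose2[OF cg]) auto
  have iJ: "(J s) integrable_on {-pi..pi}" for s using cJ integrable_continuous_interval by blast
  have iL: "L integrable_on {-pi..pi}" using cL integrable_continuous_interval by blast
  have i1: "(\<lambda>y. 2 * J 0 y) integrable_on {-pi..pi}"
    using integrable_on_cmult_left[OF iJ, of 2] by simp
  have i2: "(\<lambda>y. 10 * pi * k\<^sup>2 * t\<^sup>2 * L y) integrable_on {-pi..pi}"
    using integrable_on_cmult_left[OF iL, of "10 * pi * k\<^sup>2 * t\<^sup>2"] by simp
  have "integral {-pi..pi} (J t) \<le> integral {-pi..pi} (\<lambda>y. 2 * J 0 y + 10 * pi * k\<^sup>2 * t\<^sup>2 * L y)"
  proof (rule integral_le)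
    show "(\<lambda>y. 2 * J 0 y + 10 * pi * k\<^sup>2 * t\<^sup>2 * L y) integrable_on {-pi..pi}"
      by (rule integrable_add[OF i1 i2])
    fix y
    have K: "(k * cos (k * y))\<^sup>2 \<le> k\<^sup>2"
    proof -
      have "(cos (k * y))\<^sup>2 \<le> 1"
        using sin_cos_squared_add[of "k * y"] zero_le_power2[of "sin (k * y)"] by linarith
      from mult_left_mono[OF this, of "k\<^sup>2"] show ?thesis by (simp add: power_mult_distrib)
    qed
    show "J t y \<le> 2 * J 0 y + 10 * pi * k\<^sup>2 * t\<^sup>2 * L y"
      unfolding J_def L_def by (rule pw_ineq[OF K])
  qed (rule iJ)
  also have "\<dots> = 2 * integral {-pi..pi} (J 0) + 10 * pi * k\<^sup>2 * t\<^sup>2 * integral {-pi..pi} L"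
    unfolding integral_add[OF i1 i2] integral_mult[OF iJ, symmetric] integral_mult[OF iL, symmetric] ..
  finally have fin: "H1_sq (R t) \<le> 2 * H1_sq (R 0) + 10 * pi * k\<^sup>2 * t\<^sup>2 * L2_sq (R 0)"
    unfolding HR LR .
  have e1: "\<rho> t = R t" by (rule rho_eq[OF t])
  have e2: "\<rho> 0 = R 0" by (rule rho_eq) simp
  show ?thesis unfolding e1 e2 using fin by (simp add: k_def)
qed

end
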